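(* For $\upsilon=2/3$, the limit $\lim_{N\to\infty,\ N\text{ odd}}\rho(\upsilon,N)$ does not exist (here $N$ ranges over all odd positive integers, not only primes).
   Context: For an integer $N\ge 2$ and $f:\mathbb{Z}_N\to\mathbb{C}$, define $\mathbb{E}(f)=\frac1N\sum_{n\in\mathbb{Z}_N} f(n)$ and $\Lambda_3(f)=\frac{1}{N^2}\sum_{n,d\in\mathbb{Z}_N} f(n)f(n+d)f(n+2d)$. For $\upsilon\in(0,1]$, $\rho(\upsilon,N)=\min\{\Lambda_3(f): f:\mathbb{Z}_N\to[0,1],\ \mathbb{E}(f)\ge\upsilon\}$. *)

theory Defs
  imports Complex_Main
begin

text \<open>Z_N is represented by the residues {0..<N}; addition is taken mod N.
  A function Z_N -> C / [0,1] is a function on nat whose values on {0..<N} matter.\<close>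

definition ZE :: "nat \<Rightarrow> (nat \<Rightarrow> real) \<Rightarrow> real" where
  "ZE N f = (1 / real N) * (\<Sum>n<N. f n)"

definition Lambda3 :: "nat \<Rightarrow> (nat \<Rightarrow> real) \<Rightarrow> real" where
  "Lambda3 N f = (1 / (real N)^2) *
     (\<Sum>n<N. \<Sum>d<N. f n * f ((n + d) mod N) * f ((n + 2 * d) mod N))"

text \<open>rho(v,N) = min of Lambda3 over f : Z_N -> [0,1] with mean >= v
  (the minimum exists by compactness, so it equals the infimum).\<close>
definition rho :: "real \<Rightarrow> nat \<Rightarrow> real" where
  "rho v N = Inf {Lambda3 N f | f. (\<forall>n<N. 0 \<le> f n \<and> f n \<le> 1) \<and> ZE N f \<ge> v}"

end

theory Submission
  imports Defs "HOL-Analysis.Analysis" "HOL-Computational_Algebra.Primes"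
begin


definition om :: "nat \<Rightarrow> complex" where
  "om N = exp (2 * of_real pi * \<i> / of_nat N)"

lemma om_pow: "om N ^ j = exp (2 * of_real pi * \<i> * of_nat j / of_nat N)"
  unfolding om_def by (metis exp_of_nat_mult mult.commute times_divide_eq_right)

lemma om_pow_eq: "N \<ge> 1 \<Longrightarrow> om N ^ j = om N ^ k \<longleftrightarrow> j mod N = k mod N"
  unfolding om_pow by (rule complex_root_unity_eq)

lemma om_pow_1: "N \<ge> 1 \<Longrightarrow> om N ^ j = 1 \<longleftrightarrow> N dvd j"
  unfolding om_pow by (rule complex_root_unity_eq_1)

lemma norm_om_pow [simp]: "norm (om N ^ j) = 1"
  unfolding om_pow by (simp add: norm_exp_i_times[of "2 * pi * j / N", simplified] )

lemma om_cnj: "om N ^ j * cnj (om N ^ j) = 1"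
  by (metis complex_norm_square norm_om_pow of_real_1 power_one)

lemma geom_zero: assumes "(z::complex) ^ N = 1" "z \<noteq> 1" shows "(\<Sum>r<N. z ^ r) = 0"
  using assms by (simp add: geometric_sum)

lemma orth:
  assumes N: "N \<ge> 1"
  shows "(\<Sum>r<N. (om N ^ x * cnj (om N ^ y)) ^ r) = (if x mod N = y mod N then of_nat N else 0)"
proof (cases "x mod N = y mod N")
  case True
  then have "om N ^ x = om N ^ y" using om_pow_eq[OF N] by simp
  then have "om N ^ x * cnj (om N ^ y) = 1" using om_cnj by simp
  then show ?thesis using True by simp
next
  case False
  let ?q = "om N ^ x * cnj (om N ^ y)"
  have "?q \<noteq> 1"
  proof
    assume "?q = 1"
    then have e1: "?q * om N ^ y = om N ^ y" by simp
    have e2: "?q * om N ^ y = om N ^ x" using om_cnj[of N y]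
      by (simp add: mult.commute mult.left_commute)
    have "om N ^ x = om N ^ y" using e1 e2 by metis
    then show False using False om_pow_eq[OF N] by simp
  qed
  moreover have "?q ^ N = 1"
  proof -
    have "om N ^ N = 1" using om_pow_1[OF N] by simp
    have "?q ^ N = (om N ^ N) ^ x * cnj ((om N ^ N) ^ y)"
      by (simp add: power_mult_distrib complex_cnj_power flip: power_mult) (simp add: mult.commute)
    also have "\<dots> = 1" using \<open>om N ^ N = 1\<close> by simp
    finally show ?thesis .
  qed
  ultimately show ?thesis using False geom_zero by simp
qed



lemma Re_sq: "norm (u::complex) = 1 \<Longrightarrow> Re (u^2) = 2 * Re u ^ 2 - 1"
proof -
  assume "norm u = 1"
  then have "Re u ^ 2 + Im u ^ 2 = 1" using cmod_power2[of u] by simp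
  moreover have "Re (u^2) = Re u ^ 2 - Im u ^ 2" by (simp add: power2_eq_square)
  ultimately show ?thesis by simp
qed

lemma Re_cube: "norm (u::complex) = 1 \<Longrightarrow> Re (u^3) = 4 * Re u ^ 3 - 3 * Re u"
proof -
  assume "norm u = 1"
  then have h: "Re u ^ 2 + Im u ^ 2 = 1" using cmod_power2[of u] by simp
  have "Re (u^3) = Re u ^ 3 - 3 * Re u * Im u ^ 2"
    by (simp add: numeral_3_eq_3 power2_eq_square algebra_simps)
  also have "\<dots> = Re u ^ 3 - 3 * Re u * (1 - Re u ^ 2)"
  proof -
    have i2: "Im u ^ 2 = 1 - Re u ^ 2" using h by simp
    show ?thesis by (simp only: i2)
  qed
  also have "\<dots> = 4 * Re u ^ 3 - 3 * Re u"
    by (simp add: power2_eq_square power3_eq_cube algebra_simps)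
  finally show ?thesis .
qed

lemma cube_id: "norm (u::complex) = 1 \<Longrightarrow>
   (1 + Re u) ^ 3 = 5/2 + 15/4 * Re u + 3/2 * Re (u^2) + 1/4 * Re (u^3)"
  using Re_sq[of u] Re_cube[of u] by (simp add: power2_eq_square power3_eq_cube algebra_simps)

lemma ptwise: "0 \<le> (x::real) \<Longrightarrow> x \<le> 1 \<Longrightarrow> -1 \<le> y \<Longrightarrow> y \<le> 1 \<Longrightarrow> x * y \<le> x / 3 + (1 + y) ^ 3 / 12"
proof -
  assume a: "0 \<le> x" "x \<le> 1" "-1 \<le> y" "y \<le> 1"
  have c0: "0 \<le> (1 + y) ^ 3" using a by simp
  have c1: "y - 1/3 \<le> (1 + y) ^ 3 / 12"
  proof -
    have "(1 + y) ^ 3 / 12 - (y - 1/3) = (y - 1)^2 * (y + 5) / 12"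
      by (simp add: power2_eq_square power3_eq_cube algebra_simps)
    also have "\<dots> \<ge> 0" using a by simp
    finally show ?thesis by simp
  qed
  have "x * (y - 1/3) \<le> x * ((1 + y) ^ 3 / 12)" by (rule mult_left_mono[OF c1 a(1)])
  also have "\<dots> \<le> (1 + y) ^ 3 / 12" using a c0 by (simp add: mult_left_le_one_le)
  finally show ?thesis by (simp add: algebra_simps)
qed

lemma sum_root_zero:
  assumes "(z::complex) ^ N = 1" "z \<noteq> 1"
  shows "(\<Sum>a<N. w * z ^ a) = 0"
  using geom_zero[OF assms] by (simp flip: sum_distrib_left)

lemma fbound:
  fixes f :: "nat \<Rightarrow> real" and z :: complex
  assumes f01: "\<forall>a<N. 0 \<le> f a \<and> f a \<le> 1" and S: "(\<Sum>a<N. f a) \<ge> 2 * real N / 3"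
    and zN: "z ^ N = 1" and z1: "z \<noteq> 1" and z2: "z ^ 2 \<noteq> 1" and z3: "z ^ 3 \<noteq> 1"
    and nz: "norm z = 1"
  shows "norm (\<Sum>a<N. of_real (f a) * z ^ a) \<le> 23 * real N / 72"
proof -
  define g where "g a = 1 - f a" for a
  define Z where "Z = (\<Sum>a<N. of_real (g a) * z ^ a)"
  have "(\<Sum>a<N. of_real (f a) * z ^ a) = (\<Sum>a<N. 1 * z ^ a) - Z"
    unfolding Z_def g_def by (simp add: sum_subtractf algebra_simps)
  also have "(\<Sum>a<N. 1 * z ^ a) = 0" using sum_root_zero[OF zN z1] .
  finally have eqZ: "norm (\<Sum>a<N. of_real (f a) * z ^ a) = norm Z" by simp
  obtain w where w1: "norm w = 1" and wZ: "w * Z = of_real (norm Z)"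
  proof (cases "Z = 0")
    case True then show ?thesis using that[of 1] by simp
  next
    case False
    show ?thesis
      apply (rule that[of "cnj Z / of_real (norm Z)"])
      using False apply (simp add: norm_divide)
    proof -
      have "Z * cnj Z = of_real (norm Z) * of_real (norm Z)"
        by (simp add: power2_eq_square flip: complex_norm_square)
      then show "cnj Z / of_real (norm Z) * Z = of_real (norm Z)" using False
        by (simp add: field_simps mult.commute)
    qed
  qed
  define y where "y a = Re (w * z ^ a)" for a
  have nu: "norm (w * z ^ a) = 1" for a using w1 nz by (simp add: norm_mult norm_power)
  have ybd: "-1 \<le> y a \<and> y a \<le> 1" for a
    using abs_Re_le_cmod[of "w * z ^ a"] nu[of a] unfolding y_def by linarith
  have "norm Z = Re (w * Z)" using wZ by simp
  also have "\<dots> = (\<Sum>a<N. g a * y a)"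
    unfolding Z_def y_def by (simp add: sum_distrib_left algebra_simps)
  also have "\<dots> \<le> (\<Sum>a<N. g a / 3 + (1 + y a) ^ 3 / 12)"
    apply (rule sum_mono) using f01 ybd unfolding g_def by (intro ptwise) auto
  also have "\<dots> = (\<Sum>a<N. g a) / 3 + (\<Sum>a<N. (1 + y a) ^ 3) / 12"
    by (simp add: sum.distrib sum_divide_distrib)
  also have "(\<Sum>a<N. (1 + y a) ^ 3) = 5 * real N / 2"
  proof -
    have "(\<Sum>a<N. (1 + y a) ^ 3) = (\<Sum>a<N. 5/2 + 15/4 * Re (w * z ^ a) + 3/2 * Re ((w * z ^ a)^2) + 1/4 * Re ((w * z ^ a)^3))"
      unfolding y_def using cube_id[OF nu] by simp
    also have "\<dots> = 5 * real N / 2 + 15/4 * Re (\<Sum>a<N. w * z ^ a) + 3/2 * Re (\<Sum>a<N. w^2 * (z^2) ^ a) + 1/4 * Re (\<Sum>a<N. w^3 * (z^3) ^ a)"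
      by (simp add: sum.distrib sum_distrib_left power_mult_distrib flip: power_mult) (simp add: mult.commute)
    also have "(\<Sum>a<N. w * z ^ a) = 0" using sum_root_zero[OF zN z1] .
    also have "(\<Sum>a<N. w^2 * (z^2) ^ a) = 0"
      using sum_root_zero[OF _ z2, of N] zN by (metis power_mult mult.commute power_one)
    also have "(\<Sum>a<N. w^3 * (z^3) ^ a) = 0"
      using sum_root_zero[OF _ z3, of N] zN by (metis power_mult mult.commute power_one)
    finally show ?thesis by simp
  qed
  also have "(\<Sum>a<N. g a) = N - (\<Sum>a<N. f a)" unfolding g_def by (simp add: sum_subtractf)
  finally have "norm Z \<le> (N - (\<Sum>a<N. f a)) / 3 + 5 * real N / 2 / 12" .
  with S have "norm Z \<le> 23 * real N / 72" by (simp add: field_simps)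
  with eqZ show ?thesis by simp
qed



lemma m1: "(n::nat) < N \<Longrightarrow> b < N \<Longrightarrow> (n + (b + N - n) mod N) mod N = b"
proof -
  assume a: "n < N" "b < N"
  have "(n + (b + N - n) mod N) mod N = (n + (b + N - n)) mod N" by (simp add: mod_add_right_eq)
  also have "n + (b + N - n) = b + N" using a by simp
  finally show ?thesis using a by simp
qed

lemma m2: "(n::nat) < N \<Longrightarrow> d < N \<Longrightarrow> ((n + d) mod N + N - n) mod N = d"
proof -
  assume a: "n < N" "d < N"
  have "((n + d) mod N + N - n) = (n + d) mod N + (N - n)" using a by simp
  then have "((n + d) mod N + N - n) mod N = ((n + d) + (N - n)) mod N" by (simp add: mod_add_left_eq)
  also have "(n + d) + (N - n) = d + N" using a by simp
  finally show ?thesis using a by simp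
qed

lemma m3: "(n::nat) < N \<Longrightarrow> (2 * ((n + d) mod N) + N - n) mod N = (n + 2 * d) mod N"
proof -
  assume a: "n < N"
  have "2 * ((n + d) mod N) + N - n = 2 * ((n + d) mod N) + (N - n)" using a by simp
  then have "(2 * ((n + d) mod N) + N - n) mod N = (2 * ((n + d) mod N) mod N + (N - n)) mod N"
    by (simp add: mod_add_left_eq)
  also have "2 * ((n + d) mod N) mod N = (2 * (n + d)) mod N" by (simp add: mod_mult_right_eq)
  also have "((2 * (n + d)) mod N + (N - n)) mod N = (2 * (n + d) + (N - n)) mod N" by (simp add: mod_add_left_eq)
  also have "2 * (n + d) + (N - n) = (n + 2 * d) + N" using a by simp
  finally show ?thesis by simp
qed

lemma m4: "(a::nat) < N \<Longrightarrow> c < N \<Longrightarrow> ((a + c) mod N = (2 * b) mod N) \<longleftrightarrow> c = (2 * b + N - a) mod N"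
proof
  assume a: "a < N" "c < N" and h: "(a + c) mod N = (2 * b) mod N"
  have "c = (c + N) mod N" using a by simp
  also have "c + N = (a + c) + (N - a)" using a by simp
  also have "((a + c) + (N - a)) mod N = ((a + c) mod N + (N - a)) mod N" by (simp add: mod_add_left_eq)
  also have "\<dots> = ((2 * b) mod N + (N - a)) mod N" using h by simp
  also have "\<dots> = (2 * b + (N - a)) mod N" by (simp add: mod_add_left_eq)
  also have "2 * b + (N - a) = 2 * b + N - a" using a by simp
  finally show "c = (2 * b + N - a) mod N" .
next
  assume a: "a < N" "c < N" and h: "c = (2 * b + N - a) mod N"
  have "(a + c) mod N = (a + (2 * b + N - a)) mod N" using h by (simp add: mod_add_right_eq)
  also have "a + (2 * b + N - a) = 2 * b + N" using a by simp
  finally show "(a + c) mod N = (2 * b) mod N" by simp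
qed

lemma triple_comb:
  fixes f :: "nat \<Rightarrow> real"
  shows "(\<Sum>n<N. \<Sum>d<N. f n * f ((n + d) mod N) * f ((n + 2 * d) mod N)) =
         (\<Sum>a<N. \<Sum>b<N. \<Sum>c<N. (if (a + c) mod N = (2 * b) mod N then f a * f b * f c else 0))"
proof (rule sum.cong[OF refl])
  fix n assume n: "n \<in> {..<N}"
  have "(\<Sum>d<N. f n * f ((n + d) mod N) * f ((n + 2 * d) mod N)) =
        (\<Sum>b<N. f n * f b * f ((2 * b + N - n) mod N))"
    apply (rule sum.reindex_bij_witness[where i = "\<lambda>b. (b + N - n) mod N" and j = "\<lambda>d. (n + d) mod N"])
    using n by (auto simp: m1 m2 m3)
  also have "\<dots> = (\<Sum>b<N. \<Sum>c<N. (if (n + c) mod N = (2 * b) mod N then f n * f b * f c else 0))"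
  proof (rule sum.cong[OF refl])
    fix b assume b: "b \<in> {..<N}"
    have "(\<Sum>c<N. (if (n + c) mod N = (2 * b) mod N then f n * f b * f c else 0)) =
          (\<Sum>c<N. (if c = (2 * b + N - n) mod N then f n * f b * f c else 0))"
      using n m4[of n N] by (intro sum.cong) auto
    also have "\<dots> = f n * f b * f ((2 * b + N - n) mod N)"
      using n by (simp add: sum.delta')
    finally show "f n * f b * f ((2 * b + N - n) mod N) = (\<Sum>c<N. (if (n + c) mod N = (2 * b) mod N then f n * f b * f c else 0))" by simp
  qed
  finally show "(\<Sum>d<N. f n * f ((n + d) mod N) * f ((n + 2 * d) mod N)) = (\<Sum>b<N. \<Sum>c<N. (if (n + c) mod N = (2 * b) mod N then f n * f b * f c else 0))" .
qed



definition FT :: "nat \<Rightarrow> (nat \<Rightarrow> real) \<Rightarrow> nat \<Rightarrow> complex" where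
  "FT N f r = (\<Sum>a<N. of_real (f a) * (om N ^ a) ^ r)"

lemma swap3: "(\<Sum>r\<in>R. \<Sum>a\<in>A. \<Sum>b\<in>B. h r a b) = (\<Sum>a\<in>A. \<Sum>b\<in>B. \<Sum>r\<in>R. h r a b)"
proof -
  have "(\<Sum>r\<in>R. \<Sum>a\<in>A. \<Sum>b\<in>B. h r a b) = (\<Sum>a\<in>A. \<Sum>r\<in>R. \<Sum>b\<in>B. h r a b)" by (rule sum.swap)
  also have "\<dots> = (\<Sum>a\<in>A. \<Sum>b\<in>B. \<Sum>r\<in>R. h r a b)" by (rule sum.cong[OF refl], rule sum.swap)
  finally show ?thesis .
qed

lemma swap4: "(\<Sum>r\<in>R. \<Sum>a\<in>A. \<Sum>b\<in>B. \<Sum>c\<in>C. h r a b c) = (\<Sum>a\<in>A. \<Sum>b\<in>B. \<Sum>c\<in>C. \<Sum>r\<in>R. h r a b c)"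
proof -
  have "(\<Sum>r\<in>R. \<Sum>a\<in>A. \<Sum>b\<in>B. \<Sum>c\<in>C. h r a b c) = (\<Sum>a\<in>A. \<Sum>r\<in>R. \<Sum>b\<in>B. \<Sum>c\<in>C. h r a b c)" by (rule sum.swap)
  also have "\<dots> = (\<Sum>a\<in>A. \<Sum>b\<in>B. \<Sum>c\<in>C. \<Sum>r\<in>R. h r a b c)" by (rule sum.cong[OF refl], rule swap3)
  finally show ?thesis .
qed

lemma prod3: "(\<Sum>a\<in>A. x a) * (\<Sum>c\<in>C. y c) * (\<Sum>b\<in>B. z b) = (\<Sum>a\<in>A. \<Sum>c\<in>C. \<Sum>b\<in>B. x a * y c * z b)"
  for x y z :: "'x \<Rightarrow> 'a::comm_ring"
proof -
  have "(\<Sum>a\<in>A. x a) * (\<Sum>c\<in>C. y c) * (\<Sum>b\<in>B. z b) = (\<Sum>a\<in>A. x a * ((\<Sum>c\<in>C. y c) * (\<Sum>b\<in>B. z b)))"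
    by (simp only: sum_distrib_right mult.assoc)
  also have "\<dots> = (\<Sum>a\<in>A. \<Sum>c\<in>C. \<Sum>b\<in>B. x a * (y c * z b))"
    unfolding sum_product by (simp only: sum_distrib_left)
  finally show ?thesis by (simp only: mult.assoc)
qed

lemma FT_sq: "of_real (norm (FT N f r) ^ 2) =
  (\<Sum>a<N. \<Sum>b<N. of_real (f a * f b) * (om N ^ a * cnj (om N ^ b)) ^ r)"
  unfolding complex_norm_square FT_def
  by (simp add: sum_product power_mult_distrib mult_ac)

lemma FT_tri: "FT N f r ^ 2 * cnj (FT N f (2 * r)) =
  (\<Sum>a<N. \<Sum>c<N. \<Sum>b<N. of_real (f a * f c * f b) * (om N ^ (a + c) * cnj (om N ^ (2 * b))) ^ r)"
proof -
  have "FT N f r ^ 2 * cnj (FT N f (2 * r)) = (\<Sum>a<N. of_real (f a) * (om N ^ a) ^ r) * (\<Sum>c<N. of_real (f c) * (om N ^ c) ^ r) * (\<Sum>b<N. cnj (of_real (f b) * (om N ^ b) ^ (2 * r)))"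
    unfolding FT_def power2_eq_square cnj_sum ..
  also have "\<dots> = (\<Sum>a<N. \<Sum>c<N. \<Sum>b<N. (of_real (f a) * (om N ^ a) ^ r) * (of_real (f c) * (om N ^ c) ^ r) * cnj (of_real (f b) * (om N ^ b) ^ (2 * r)))"
    by (rule prod3)
  also have "\<dots> = (\<Sum>a<N. \<Sum>c<N. \<Sum>b<N. of_real (f a * f c * f b) * (om N ^ (a + c) * cnj (om N ^ (2 * b))) ^ r)"
    by (intro sum.cong refl) (simp add: power_mult_distrib power_add mult_ac flip: power_mult)
  finally show ?thesis .
qed



lemma parseval:
  assumes N: "N \<ge> 1"
  shows "(\<Sum>r<N. norm (FT N f r) ^ 2) = N * (\<Sum>a<N. f a ^ 2)"
proof -
  have "of_real (\<Sum>r<N. norm (FT N f r) ^ 2) = (\<Sum>r<N. \<Sum>a<N. \<Sum>b<N. of_real (f a * f b) * (om N ^ a * cnj (om N ^ b)) ^ r)"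
    by (simp only: of_real_sum FT_sq)
  also have "\<dots> = (\<Sum>a<N. \<Sum>b<N. \<Sum>r<N. of_real (f a * f b) * (om N ^ a * cnj (om N ^ b)) ^ r)"
    by (rule swap3)
  also have "\<dots> = (\<Sum>a<N. \<Sum>b<N. of_real (f a * f b) * (if a mod N = b mod N then of_nat N else 0))"
    by (simp only: orth[OF N] flip: sum_distrib_left)
  also have "\<dots> = (\<Sum>a<N. of_real (f a * f a) * of_nat N)"
  proof (rule sum.cong[OF refl])
    fix a assume a: "a \<in> {..<N}"
    have "(\<Sum>b<N. of_real (f a * f b) * (if a mod N = b mod N then of_nat N else 0)) =
          (\<Sum>b<N. (if a = b then of_real (f a * f b) * of_nat N else 0 :: complex))"
      using a by (intro sum.cong refl) auto
    also have "\<dots> = of_real (f a * f a) * of_nat N" using a by simp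
    finally show "(\<Sum>b<N. of_real (f a * f b) * (if a mod N = b mod N then of_nat N else 0)) = (of_real (f a * f a) * of_nat N :: complex)" .
  qed
  also have "\<dots> = of_real (N * (\<Sum>a<N. f a ^ 2))"
    by (simp add: sum_distrib_left power2_eq_square mult_ac)
  finally show ?thesis by (simp only: of_real_eq_iff)
qed

lemma triple:
  assumes N: "N \<ge> 1"
  shows "(\<Sum>r<N. FT N f r ^ 2 * cnj (FT N f (2 * r))) =
    of_real (N * (\<Sum>n<N. \<Sum>d<N. f n * f ((n + d) mod N) * f ((n + 2 * d) mod N)))"
proof -
  have "(\<Sum>r<N. FT N f r ^ 2 * cnj (FT N f (2 * r))) =
     (\<Sum>r<N. \<Sum>a<N. \<Sum>c<N. \<Sum>b<N. of_real (f a * f c * f b) * (om N ^ (a + c) * cnj (om N ^ (2 * b))) ^ r)"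
    by (simp only: FT_tri)
  also have "\<dots> = (\<Sum>a<N. \<Sum>c<N. \<Sum>b<N. \<Sum>r<N. of_real (f a * f c * f b) * (om N ^ (a + c) * cnj (om N ^ (2 * b))) ^ r)"
    by (rule swap4)
  also have "\<dots> = (\<Sum>a<N. \<Sum>c<N. \<Sum>b<N. of_real (f a * f c * f b) * (if (a + c) mod N = (2 * b) mod N then of_nat N else 0))"
    by (simp only: orth[OF N] flip: sum_distrib_left)
  also have "\<dots> = of_real (N * (\<Sum>a<N. \<Sum>c<N. \<Sum>b<N. (if (a + c) mod N = (2 * b) mod N then f a * f b * f c else 0)))"
    by (simp add: sum_distrib_left if_distrib mult_ac cong: if_cong)
  also have "(\<Sum>a<N. \<Sum>c<N. \<Sum>b<N. (if (a + c) mod N = (2 * b) mod N then f a * f b * f c else 0)) =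
             (\<Sum>a<N. \<Sum>b<N. \<Sum>c<N. (if (a + c) mod N = (2 * b) mod N then f a * f b * f c else 0))"
    by (intro sum.cong refl sum.swap)
  also have "\<dots> = (\<Sum>n<N. \<Sum>d<N. f n * f ((n + d) mod N) * f ((n + 2 * d) mod N))"
    by (rule triple_comb[symmetric])
  finally show ?thesis .
qed



lemma ndvd:
  assumes "odd N" "\<not> 3 dvd N" "0 < r" "r < N" "k \<in> {1,2,3::nat}"
  shows "\<not> N dvd (2 * r * k)"
proof
  assume d: "N dvd (2 * r * k)"
  have c2: "coprime N 2" using assms by simp
  have c3: "coprime N 3"
  proof -
    have "prime (3::nat)" by simp
    then have "coprime 3 N" using assms(2) by (rule prime_imp_coprime)
    then show ?thesis by (simp add: coprime_commute)
  qed
  have "coprime N (2 * k)" using assms(5) c2 c3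
    by (auto simp: coprime_mult_right_iff)
  then have "N dvd r" using d by (metis coprime_dvd_mult_left_iff mult.assoc mult.commute)
  then show False using assms(3,4) by (simp add: nat_dvd_not_less)
qed

lemma poly_fact:
  fixes S n :: real
  assumes "S \<ge> 2 * n / 3" "n \<ge> 0"
  shows "73 / 324 * n ^ 3 \<le> S ^ 3 - 23 * n / 72 * (n * S - S ^ 2)"
proof -
  have "S ^ 3 - 23 * n / 72 * (n * S - S ^ 2) - 73 / 324 * n ^ 3 =
        (S - 2 * n / 3) * (S ^ 2 + 71 / 72 * n * S + 73 / 216 * n ^ 2)"
    by (simp add: power2_eq_square power3_eq_cube field_simps)
  also have "\<dots> \<ge> 0"
  proof (rule mult_nonneg_nonneg)
    show "0 \<le> S - 2 * n / 3" using assms by simp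
    have "S \<ge> 0" using assms by simp
    then show "0 \<le> S ^ 2 + 71 / 72 * n * S + 73 / 216 * n ^ 2" using assms by simp
  qed
  finally show ?thesis by simp
qed

lemma lower:
  fixes f :: "nat \<Rightarrow> real"
  assumes N1: "N \<ge> 1" and oN: "odd N" and N3: "\<not> 3 dvd N"
    and f01: "\<forall>n<N. 0 \<le> f n \<and> f n \<le> 1" and E: "ZE N f \<ge> 2/3"
  shows "Lambda3 N f \<ge> 73/324"
proof -
  define S where "S = (\<Sum>a<N. f a)"
  define T where "T = (\<Sum>n<N. \<Sum>d<N. f n * f ((n + d) mod N) * f ((n + 2 * d) mod N))"
  have Npos: "real N > 0" using N1 by simp
  have S_ge: "S \<ge> 2 * real N / 3"
    using E Npos unfolding ZE_def S_def by (simp add: field_simps)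
  have f2: "(\<Sum>a<N. f a ^ 2) \<le> S"
    unfolding S_def using f01 by (intro sum_mono) (simp add: power2_eq_square mult_left_le_one_le)
  have FT0: "FT N f 0 = of_real S" by (simp add: FT_def S_def)
  have split: "(\<Sum>r<N. h r) = h 0 + (\<Sum>r\<in>{1..<N}. h r)" for h :: "nat \<Rightarrow> 'b::comm_monoid_add"
    using N1 by (simp add: lessThan_atLeast0 sum.atLeast_Suc_lessThan)
  have zb: "norm (FT N f (2 * r)) \<le> 23 * real N / 72" if r: "r \<in> {1..<N}" for r
  proof -
    let ?z = "om N ^ (2 * r)"
    have eq: "FT N f (2 * r) = (\<Sum>a<N. of_real (f a) * ?z ^ a)"
      unfolding FT_def by (intro sum.cong refl) (metis power_mult mult.commute)
    have nd: "\<not> N dvd (2 * r * k)" if "k \<in> {1,2,3}" for k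
      using ndvd[OF oN N3, of r k] r that by auto
    have "?z ^ N = 1" using om_pow_1[OF N1] by (simp flip: power_mult)
    moreover have "?z \<noteq> 1" using om_pow_1[OF N1, of "2 * r"] nd[of 1] by simp
    moreover have "?z ^ 2 \<noteq> 1" using om_pow_1[OF N1, of "2 * r * 2"] nd[of 2] by (simp flip: power_mult)
    moreover have "?z ^ 3 \<noteq> 1" using om_pow_1[OF N1, of "2 * r * 3"] nd[of 3] by (simp flip: power_mult)
    moreover have "norm ?z = 1" by simp
    ultimately show ?thesis unfolding eq using fbound[OF f01, of ?z] S_ge S_def by simp
  qed
  have par: "(\<Sum>r\<in>{1..<N}. norm (FT N f r) ^ 2) = N * (\<Sum>a<N. f a ^ 2) - S ^ 2"
    using parseval[OF N1, of f] split[of "\<lambda>r. norm (FT N f r) ^ 2"] FT0 by simp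
  have "N * T = Re (\<Sum>r<N. FT N f r ^ 2 * cnj (FT N f (2 * r)))"
    using triple[OF N1, of f] unfolding T_def by simp
  also have "\<dots> = S ^ 3 + (\<Sum>r\<in>{1..<N}. Re (FT N f r ^ 2 * cnj (FT N f (2 * r))))"
    using split[of "\<lambda>r. FT N f r ^ 2 * cnj (FT N f (2 * r))"] FT0
    by (simp add: power2_eq_square power3_eq_cube)
  also have "\<dots> \<ge> S ^ 3 - (\<Sum>r\<in>{1..<N}. norm (FT N f r) ^ 2 * (23 * real N / 72))"
  proof -
    have "(\<Sum>r\<in>{1..<N}. - (norm (FT N f r) ^ 2 * (23 * real N / 72))) \<le> (\<Sum>r\<in>{1..<N}. Re (FT N f r ^ 2 * cnj (FT N f (2 * r))))"
    proof (rule sum_mono)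
      fix r assume r: "r \<in> {1..<N}"
      have "- Re (FT N f r ^ 2 * cnj (FT N f (2 * r))) \<le> norm (FT N f r ^ 2 * cnj (FT N f (2 * r)))"
        using abs_Re_le_cmod[of "FT N f r ^ 2 * cnj (FT N f (2 * r))"] by linarith
      also have "\<dots> = norm (FT N f r) ^ 2 * norm (FT N f (2 * r))" by (simp add: norm_mult norm_power)
      also have "\<dots> \<le> norm (FT N f r) ^ 2 * (23 * real N / 72)" by (rule mult_left_mono[OF zb[OF r] zero_le_power2])
      finally show "- (norm (FT N f r) ^ 2 * (23 * real N / 72)) \<le> Re (FT N f r ^ 2 * cnj (FT N f (2 * r)))" by linarith
    qed
    then show ?thesis by (simp add: sum_negf)
  qed
  finally have "N * T \<ge> S ^ 3 - 23 * real N / 72 * (N * S - S ^ 2)"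
  proof -
    assume h: "S ^ 3 - (\<Sum>r\<in>{1..<N}. norm (FT N f r) ^ 2 * (23 * real N / 72)) \<le> N * T"
    have "(\<Sum>r\<in>{1..<N}. norm (FT N f r) ^ 2 * (23 * real N / 72)) = 23 * real N / 72 * (N * (\<Sum>a<N. f a ^ 2) - S ^ 2)"
      by (simp only: sum_distrib_right[symmetric] par mult.commute)
    also have "\<dots> \<le> 23 * real N / 72 * (N * S - S ^ 2)"
      using f2 by (intro mult_left_mono) (auto intro: mult_left_mono)
    finally show ?thesis using h by linarith
  qed
  with poly_fact[OF S_ge] have "73 / 324 * real N ^ 3 \<le> N * T" by simp
  then have "73 / 324 * real N ^ 2 \<le> T" using Npos
    by (simp add: power3_eq_cube power2_eq_square mult_ac mult_le_cancel_left_pos)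
  then show ?thesis unfolding Lambda3_def T_def[symmetric] using Npos by (simp add: field_simps)
qed



definition f0 :: "nat \<Rightarrow> real" where "f0 n = (if 3 dvd n then 0 else 1)"

lemma cnt1: "(\<Sum>n<3 * m. (if 3 dvd n then 1 else 0 :: real)) = real m"
proof (induction m)
  case 0 then show ?case by simp
next
  case (Suc m)
  have e: "3 * Suc m = Suc (Suc (Suc (3 * m)))" by simp
  have "\<not> 3 dvd Suc (3 * m)" "\<not> 3 dvd Suc (Suc (3 * m))" by presburger+
  then show ?case unfolding e using Suc by simp
qed

lemma cnt2: "(\<Sum>n<3 * m. (if \<not> 3 dvd n then 1 else 0 :: real)) = 2 * real m"
proof (induction m)
  case 0 then show ?case by simp
next
  case (Suc m)
  have e: "3 * Suc m = Suc (Suc (Suc (3 * m)))" by simp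
  have "\<not> 3 dvd Suc (3 * m)" "\<not> 3 dvd Suc (Suc (3 * m))" by presburger+
  then show ?case unfolding e using Suc by simp
qed

lemma f0_prod:
  assumes "3 dvd N"
  shows "f0 n * f0 ((n + d) mod N) * f0 ((n + 2 * d) mod N) =
         (if \<not> 3 dvd n then 1 else 0) * (if 3 dvd d then 1 else 0)"
proof -
  have a: "3 dvd ((n + d) mod N) \<longleftrightarrow> 3 dvd (n + d)" "3 dvd ((n + 2 * d) mod N) \<longleftrightarrow> 3 dvd (n + 2 * d)"
    using assms by (simp_all add: dvd_mod_iff)
  show ?thesis unfolding f0_def a by (auto; presburger)
qed

lemma upper:
  assumes "m \<ge> 1"
  shows "rho (2/3) (3 * m) \<le> 2/9"
proof -
  let ?N = "3 * m"
  have Npos: "real m > 0" using assms by simp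
  let ?X = "{Lambda3 ?N f | f. (\<forall>n<?N. 0 \<le> f n \<and> f n \<le> 1) \<and> ZE ?N f \<ge> 2/3}"
  have sf: "(\<Sum>n<?N. f0 n) = 2 * real m"
  proof -
    have "(\<Sum>n<?N. f0 n) = (\<Sum>n<?N. (if \<not> 3 dvd n then 1 else 0 :: real))"
      by (rule sum.cong) (auto simp: f0_def)
    then show ?thesis using cnt2[of m] by simp
  qed
  have ze: "ZE ?N f0 = 2/3" unfolding ZE_def sf using Npos by simp
  have "(\<Sum>n<?N. \<Sum>d<?N. f0 n * f0 ((n + d) mod ?N) * f0 ((n + 2 * d) mod ?N)) =
        (\<Sum>n<?N. \<Sum>d<?N. (if \<not> 3 dvd n then 1 else 0) * (if 3 dvd d then 1 else 0 :: real))"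
    by (simp only: f0_prod[of ?N] dvd_triv_left)
  also have "\<dots> = (\<Sum>n<?N. (if \<not> 3 dvd n then 1 else 0)) * (\<Sum>d<?N. (if 3 dvd d then 1 else 0 :: real))"
    by (simp only: sum_product)
  also have "\<dots> = 2 * m * m" using cnt1 cnt2 by simp
  finally have lam: "Lambda3 ?N f0 = 2/9" unfolding Lambda3_def using Npos
    by (simp add: field_simps power2_eq_square)
  have mem: "Lambda3 ?N f0 \<in> ?X" using ze by (auto simp: f0_def)
  have bdd: "bdd_below ?X"
  proof (rule bdd_belowI)
    fix x assume "x \<in> ?X"
    then obtain f where x: "x = Lambda3 ?N f" and f: "\<forall>n<?N. 0 \<le> f n \<and> f n \<le> 1" by auto
    have "0 \<le> Lambda3 ?N f" unfolding Lambda3_def using f Npos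
      by (intro mult_nonneg_nonneg sum_nonneg) auto
    then show "0 \<le> x" using x by simp
  qed
  have "rho (2/3) ?N \<le> Lambda3 ?N f0" unfolding rho_def by (rule cInf_lower[OF mem bdd])
  then show ?thesis using lam by simp
qed

lemma lower_rho:
  assumes "N \<ge> 1" "odd N" "\<not> 3 dvd N"
  shows "rho (2/3) N \<ge> 73/324"
  unfolding rho_def
proof (rule cInf_greatest)
  have "ZE N (\<lambda>_. 1) = 1" unfolding ZE_def using assms by simp
  then have "Lambda3 N (\<lambda>_. 1) \<in> {Lambda3 N f | f. (\<forall>n<N. 0 \<le> f n \<and> f n \<le> 1) \<and> ZE N f \<ge> 2/3}"
    by (auto intro!: exI[of _ "\<lambda>_. 1"])
  then show "{Lambda3 N f | f. (\<forall>n<N. 0 \<le> f n \<and> f n \<le> 1) \<and> ZE N f \<ge> 2/3} \<noteq> {}" by blast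
next
  fix x assume "x \<in> {Lambda3 N f | f. (\<forall>n<N. 0 \<le> f n \<and> f n \<le> 1) \<and> ZE N f \<ge> 2/3}"
  then show "73/324 \<le> x" using lower[OF assms] by auto
qed

theorem theorem2:
  shows "\<not> (\<exists>L. ((\<lambda>N. rho (2/3) N) \<longlongrightarrow> L) (inf at_top (principal {N. odd N})))"
proof
  assume "\<exists>L. ((\<lambda>N. rho (2/3) N) \<longlongrightarrow> L) (inf at_top (principal {N. odd N}))"
  then obtain L where L: "((\<lambda>N. rho (2/3) N) \<longlongrightarrow> L) (inf at_top (principal {N. odd N}))" by blast
  have "eventually (\<lambda>N. dist (rho (2/3) N) L < 1/648) (inf at_top (principal {N. odd N}))"
    using tendstoD[OF L, of "1/648"] by linarith
  then have "eventually (\<lambda>N. N \<in> {N. odd N} \<longrightarrow> dist (rho (2/3) N) L < 1/648) at_top"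
    by (simp add: eventually_inf_principal)
  then obtain M where M: "\<And>N. N \<ge> M \<Longrightarrow> odd N \<longrightarrow> dist (rho (2/3) N) L < 1/648"
    by (auto simp: eventually_at_top_linorder)
  have o1: "odd (3 * (2 * M + 1))" by simp
  have h1: "dist (rho (2/3) (3 * (2 * M + 1))) L < 1/648" using M[of "3 * (2 * M + 1)"] o1 by simp
  have u1: "rho (2/3) (3 * (2 * M + 1)) \<le> 2/9" by (rule upper) simp
  have o2: "odd (6 * M + 7)" by presburger
  have t2: "\<not> 3 dvd (6 * M + 7)" by presburger
  have h2: "dist (rho (2/3) (6 * M + 7)) L < 1/648" using M[of "6 * M + 7"] o2 by simp
  have l2: "rho (2/3) (6 * M + 7) \<ge> 73/324" by (rule lower_rho[OF _ o2 t2]) simp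
  show False using h1 h2 u1 l2 unfolding dist_real_def by linarith
qed

end
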